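(* There exists an online adaptive algorithm that, given an uncertainty matroid $\mathcal{M}$ with uniform query costs and a minimum-weight basis $B$ (with respect to the unknown weights $w$) that can be verified by a minimum-cardinality certificate $Q^*$ of $\mathcal{M}$, queries a set $Q$ with $|Q|\le 2|Q^*|$ that is a certificate verifying $B$.
   Context: A weighted uncertainty matroid $\mathcal{M}=(E,\mathcal{I},A,w)$ consists of a matroid $M=(E,\mathcal{I})$ on a finite set $E$, for each $e\in E$ a non-empty finite union $A_e$ of bounded real intervals (each open or closed), and a weight $w_e\in A_e$. A minimum-weight basis (MWB) is a basis minimizing total weight. A weight assignment is $w^*$ with $w^*_e\in A_e$, consistent with $Q$ if $w^*_e=w_e$ on $Q$. $Q$ verifies an MWB $B$ (is a certificate for $B$) if for every weight assignment consistent with $Q$, $B$ is an MWB with respect to it; a certificate for $\mathcal{M}$ is a set verifying some MWB, and a minimum-cardinality certificate is one of minimum size. In the online adaptive setting the algorithm knows $M$ and the areas $A_e$ but initially not the weights; querying an element $e$ reveals $w_e$ (at unit cost), and the algorithm chooses queries adaptively based on previously revealed weights; $Q$ denotes the set of queried elements. *)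

theory Defs
  imports Complex_Main
begin

definition matroid :: "'a set \<Rightarrow> ('a set \<Rightarrow> bool) \<Rightarrow> bool" where
  "matroid E indep \<longleftrightarrow>
     finite E \<and>
     (\<forall>I. indep I \<longrightarrow> I \<subseteq> E) \<and>
     indep {} \<and>
     (\<forall>I J. indep J \<and> I \<subseteq> J \<longrightarrow> indep I) \<and>
     (\<forall>I J. indep I \<and> indep J \<and> card I < card J \<longrightarrow> (\<exists>x\<in>J - I. indep (insert x I)))"

definition is_basis :: "'a set \<Rightarrow> ('a set \<Rightarrow> bool) \<Rightarrow> 'a set \<Rightarrow> bool" where
  "is_basis E indep B \<longleftrightarrow> indep B \<and> (\<forall>x\<in>E - B. \<not> indep (insert x B))"

definition bounded_interval :: "real set \<Rightarrow> bool" where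
  "bounded_interval I \<longleftrightarrow> (\<exists>a b. I = {a..b} \<or> I = {a<..<b})"

definition uncertainty_area :: "real set \<Rightarrow> bool" where
  "uncertainty_area S \<longleftrightarrow>
     S \<noteq> {} \<and> (\<exists>F. finite F \<and> F \<noteq> {} \<and> (\<forall>I\<in>F. bounded_interval I) \<and> S = \<Union>F)"

definition weighted_uncertainty_matroid ::
  "'a set \<Rightarrow> ('a set \<Rightarrow> bool) \<Rightarrow> ('a \<Rightarrow> real set) \<Rightarrow> ('a \<Rightarrow> real) \<Rightarrow> bool" where
  "weighted_uncertainty_matroid E indep A w \<longleftrightarrow>
     matroid E indep \<and> (\<forall>e\<in>E. uncertainty_area (A e) \<and> w e \<in> A e)"

definition is_mwb :: "'a set \<Rightarrow> ('a set \<Rightarrow> bool) \<Rightarrow> ('a \<Rightarrow> real) \<Rightarrow> 'a set \<Rightarrow> bool" where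
  "is_mwb E indep w B \<longleftrightarrow>
     is_basis E indep B \<and> (\<forall>B'. is_basis E indep B' \<longrightarrow> sum w B \<le> sum w B')"

definition weight_assignment :: "'a set \<Rightarrow> ('a \<Rightarrow> real set) \<Rightarrow> ('a \<Rightarrow> real) \<Rightarrow> bool" where
  "weight_assignment E A w' \<longleftrightarrow> (\<forall>e\<in>E. w' e \<in> A e)"

definition consistent_with :: "'a set \<Rightarrow> ('a \<Rightarrow> real) \<Rightarrow> ('a \<Rightarrow> real) \<Rightarrow> bool" where
  "consistent_with Q w w' \<longleftrightarrow> (\<forall>e\<in>Q. w' e = w e)"

definition verifies ::
  "'a set \<Rightarrow> ('a set \<Rightarrow> bool) \<Rightarrow> ('a \<Rightarrow> real set) \<Rightarrow> ('a \<Rightarrow> real) \<Rightarrow> 'a set \<Rightarrow> 'a set \<Rightarrow> bool" where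
  "verifies E indep A w Q B \<longleftrightarrow>
     Q \<subseteq> E \<and>
     (\<forall>w'. weight_assignment E A w' \<and> consistent_with Q w w' \<longrightarrow> is_mwb E indep w' B)"

definition certificate ::
  "'a set \<Rightarrow> ('a set \<Rightarrow> bool) \<Rightarrow> ('a \<Rightarrow> real set) \<Rightarrow> ('a \<Rightarrow> real) \<Rightarrow> 'a set \<Rightarrow> bool" where
  "certificate E indep A w Q \<longleftrightarrow> (\<exists>B. verifies E indep A w Q B)"

definition min_certificate ::
  "'a set \<Rightarrow> ('a set \<Rightarrow> bool) \<Rightarrow> ('a \<Rightarrow> real set) \<Rightarrow> ('a \<Rightarrow> real) \<Rightarrow> 'a set \<Rightarrow> bool" where
  "min_certificate E indep A w Q \<longleftrightarrow>
     certificate E indep A w Q \<and> (\<forall>Q'. certificate E indep A w Q' \<longrightarrow> card Q \<le> card Q')"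

text \<open>A query strategy maps the currently revealed weights (a partial map whose
  domain is the set of elements queried so far) to the next element to query,
  or None to stop. An online adaptive algorithm maps the known input
  (E, indep, A, B) -- but not the hidden weights -- to such a strategy.\<close>

type_synonym 'a strategy = "('a \<rightharpoonup> real) \<Rightarrow> 'a option"

type_synonym 'a algorithm =
  "'a set \<Rightarrow> ('a set \<Rightarrow> bool) \<Rightarrow> ('a \<Rightarrow> real set) \<Rightarrow> 'a set \<Rightarrow> 'a strategy"

fun run :: "'a strategy \<Rightarrow> ('a \<Rightarrow> real) \<Rightarrow> nat \<Rightarrow> ('a \<rightharpoonup> real)" where
  "run f w 0 = Map.empty"
| "run f w (Suc k) = (case f (run f w k) of
       None \<Rightarrow> run f w k
     | Some e \<Rightarrow> (run f w k)(e \<mapsto> w e))"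

definition terminates_with :: "'a strategy \<Rightarrow> ('a \<Rightarrow> real) \<Rightarrow> 'a set \<Rightarrow> bool" where
  "terminates_with f w Q \<longleftrightarrow> (\<exists>k. f (run f w k) = None \<and> dom (run f w k) = Q)"

end

theory Submission
  imports Defs
begin

lemma ex_min_fin:
  fixes f :: "'b \<Rightarrow> 'c::linorder"
  assumes "finite S" "S \<noteq> {}"
  shows "\<exists>x\<in>S. \<forall>y\<in>S. f x \<le> f y"
  using arg_min_if_finite[OF assms, of f] by (meson not_le)

lemma ex_max_fin:
  fixes f :: "'b \<Rightarrow> 'c::linorder"
  assumes "finite S" "S \<noteq> {}"
  shows "\<exists>x\<in>S. \<forall>y\<in>S. f y \<le> f x"
  using assms
proof (induction S rule: finite_ne_induct)
  case (singleton x) then show ?case by simp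
next
  case (insert x F)
  then obtain z where "z \<in> F" "\<forall>y\<in>F. f y \<le> f z" by blast
  then show ?case by (cases "f x \<le> f z") (auto intro: order_trans)
qed

lemma mat_fin: "matroid E indep \<Longrightarrow> finite E" unfolding matroid_def by blast
lemma mat_sub: "matroid E indep \<Longrightarrow> indep I \<Longrightarrow> I \<subseteq> E" unfolding matroid_def by blast
lemma mat_down: "matroid E indep \<Longrightarrow> indep J \<Longrightarrow> I \<subseteq> J \<Longrightarrow> indep I" unfolding matroid_def by blast
lemma mat_aug: "matroid E indep \<Longrightarrow> indep I \<Longrightarrow> indep J \<Longrightarrow> card I < card J \<Longrightarrow> \<exists>x\<in>J - I. indep (insert x I)"
  unfolding matroid_def by blast

lemma aug_to:
  assumes M: "matroid E indep" and "indep I" "indep J" "card I \<le> card J"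
  shows "\<exists>K. indep K \<and> I \<subseteq> K \<and> K \<subseteq> I \<union> J \<and> card K = card J"
  using assms(2-4)
proof (induction "card J - card I" arbitrary: I)
  case 0 then show ?case by (intro exI[of _ I]) auto
next
  case (Suc n)
  then have lt: "card I < card J" by simp
  then obtain x where x: "x \<in> J - I" "indep (insert x I)" using mat_aug[OF M] Suc.prems by blast
  have fin: "finite I" using finite_subset[OF mat_sub[OF M Suc.prems(1)] mat_fin[OF M]] .
  have c: "card (insert x I) = Suc (card I)" using x fin by simp
  then have "n = card J - card (insert x I)" using Suc.hyps(2) by simp
  from Suc.hyps(1)[OF this x(2) Suc.prems(2)] c lt
  obtain K where "indep K" "insert x I \<subseteq> K" "K \<subseteq> insert x I \<union> J" "card K = card J" by auto
  then show ?case using x by (intro exI[of _ K]) auto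
qed

lemma indep_card_basis:
  assumes M: "matroid E indep" and B1: "is_basis E indep B1" and K: "indep K" and c: "card B1 \<le> card K"
  shows "is_basis E indep K"
  unfolding is_basis_def
proof (intro conjI K ballI notI)
  fix z assume z: "z \<in> E - K" and iz: "indep (insert z K)"
  have fin: "finite K" using finite_subset[OF mat_sub[OF M K] mat_fin[OF M]] .
  have "card (insert z K) = Suc (card K)" using z fin by simp
  then have "card B1 < card (insert z K)" using c by simp
  then obtain u where u: "u \<in> insert z K - B1" "indep (insert u B1)"
    using mat_aug[OF M] B1 iz unfolding is_basis_def by blast
  have "u \<in> E" using mat_sub[OF M u(2)] by blast
  then show False using B1 u unfolding is_basis_def by blast
qed

lemma exch:
  assumes M: "matroid E indep" and B1: "is_basis E indep B1" and B2: "indep B2" and x: "x \<in> B2 - B1"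
  shows "\<exists>y\<in>B1 - B2. is_basis E indep (insert x (B1 - {y}))"
proof -
  have finE: "finite E" using mat_fin[OF M] .
  have iB1: "indep B1" using B1 unfolding is_basis_def by blast
  have finB1: "finite B1" using finite_subset[OF mat_sub[OF M iB1] finE] .
  have xE: "x \<in> E" using mat_sub[OF M B2] x by blast
  let ?I = "insert x (B1 \<inter> B2)"
  have "?I \<subseteq> B2" using x by blast
  then have iI: "indep ?I" using mat_down[OF M B2] by simp
  have cI: "card ?I \<le> card B1"
  proof (rule ccontr)
    assume "\<not> ?thesis"
    then have "card B1 < card ?I" by simp
    then obtain u where u: "u \<in> ?I - B1" "indep (insert u B1)" using mat_aug[OF M iB1 iI] by blast
    then have "u = x" by blast
    then show False using u xE x B1 unfolding is_basis_def by blast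
  qed
  obtain K where K: "indep K" "?I \<subseteq> K" "K \<subseteq> ?I \<union> B1" "card K = card B1"
    using aug_to[OF M iI iB1 cI] by blast
  have Ksub: "K \<subseteq> insert x B1" using K(3) by blast
  have cx: "card (insert x B1) = Suc (card B1)" using x finB1 by simp
  have "K \<noteq> insert x B1" using K(4) cx by auto
  then obtain y where y: "y \<in> insert x B1" "y \<notin> K" using Ksub by blast
  have yx: "y \<noteq> x" using y K(2) by blast
  have yB1: "y \<in> B1" using y yx by blast
  have yB2: "y \<notin> B2" using y K(2) yB1 by blast
  have Ksub2: "K \<subseteq> insert x (B1 - {y})" using Ksub y by blast
  have pos: "card B1 > 0" using finB1 yB1 card_gt_0_iff by blast
  have "card (insert x (B1 - {y})) = card B1" using finB1 yB1 x pos by (simp add: card_Diff_singleton)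
  then have Keq: "K = insert x (B1 - {y})"
    using card_subset_eq[OF _ Ksub2] finB1 K(4) by simp
  have "is_basis E indep K" using indep_card_basis[OF M B1 K(1)] K(4) by simp
  then show ?thesis using Keq yB1 yB2 by blast
qed

lemma swap_sum:
  fixes w :: "'a \<Rightarrow> real"
  assumes "finite B" "f \<in> B" "e \<notin> B"
  shows "sum w (insert e (B - {f})) = sum w B - w f + w e"
  using assms by (simp add: sum_diff1)

lemma local_opt:
  fixes w :: "'a \<Rightarrow> real"
  assumes M: "matroid E indep" and B: "is_basis E indep B"
    and L: "\<And>f e. f \<in> B \<Longrightarrow> e \<in> E - B \<Longrightarrow> is_basis E indep (insert e (B - {f})) \<Longrightarrow> w f \<le> w e"
  shows "is_mwb E indep w B"
proof -
  let ?Bs = "{X. is_basis E indep X}"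
  have finE: "finite E" using mat_fin[OF M] .
  have sub: "\<And>X. is_basis E indep X \<Longrightarrow> X \<subseteq> E" using mat_sub[OF M] unfolding is_basis_def by blast
  have finX: "\<And>X. is_basis E indep X \<Longrightarrow> finite X" using finite_subset[OF sub finE] by simp
  have BsP: "?Bs \<subseteq> Pow E" using sub by blast
  have finBs: "finite ?Bs" using finite_subset[OF BsP] finE by simp
  have "?Bs \<noteq> {}" using B by blast
  then obtain M0 where M0: "M0 \<in> ?Bs" "\<forall>Y\<in>?Bs. sum w M0 \<le> sum w Y"
    using ex_min_fin[OF finBs, of "sum w"] by blast
  let ?Ms = "{X\<in>?Bs. \<forall>Y\<in>?Bs. sum w X \<le> sum w Y}"
  have finMs: "finite ?Ms" using finBs by simp
  have "?Ms \<noteq> {}" using M0 by blast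
  then obtain S where S: "S \<in> ?Ms" "\<forall>Y\<in>?Ms. card (B \<inter> Y) \<le> card (B \<inter> S)"
    using ex_max_fin[OF finMs, of "\<lambda>Y. card (B \<inter> Y)"] by blast
  have SB: "is_basis E indep S" using S by blast
  have iS: "indep S" using SB unfolding is_basis_def by blast
  have iB: "indep B" using B unfolding is_basis_def by blast
  have finS: "finite S" using finX[OF SB] .
  have finB: "finite B" using finX[OF B] .
  show ?thesis
  proof (cases "S = B")
    case True then show ?thesis using S(1) unfolding is_mwb_def by blast
  next
    case False
    let ?D = "(B - S) \<union> (S - B)"
    have Dne: "?D \<noteq> {}" using False by blast
    have finD: "finite ?D" using finS finB by simp
    obtain x where x: "x \<in> ?D" "\<forall>y\<in>?D. w x \<le> w y" using ex_min_fin[OF finD Dne, of w] by blast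
    obtain f where f: "f \<in> B - S" "\<forall>y\<in>?D. w f \<le> w y"
    proof (cases "x \<in> B - S")
      case True then show ?thesis using that x by blast
    next
      case False
      then have xSB: "x \<in> S - B" using x by blast
      obtain f where f: "f \<in> B - S" "is_basis E indep (insert x (B - {f}))"
        using exch[OF M B iS xSB] by blast
      have "x \<in> E" using sub[OF SB] xSB by blast
      then have "w f \<le> w x" using L[of f x] f xSB by blast
      then show ?thesis using that f x by force
    qed
    obtain e where e: "e \<in> S - B" "is_basis E indep (insert f (S - {e}))"
      using exch[OF M SB iB f(1)] by blast
    have "w f \<le> w e" using f e by blast
    then have "sum w (insert f (S - {e})) \<le> sum w S"
      using swap_sum[of S e f w] finS e f by simp
    then have inMs: "insert f (S - {e}) \<in> ?Ms" using e S by force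
    have eq: "B \<inter> insert f (S - {e}) = insert f (B \<inter> S)" using e f by blast
    have "card (insert f (B \<inter> S)) = Suc (card (B \<inter> S))" using f finB by simp
    then show ?thesis using S(2) inMs eq by force
  qed
qed

lemma mwb_swap:
  fixes w :: "'a \<Rightarrow> real"
  assumes "is_mwb E indep w B" "finite B" "f \<in> B" "e \<notin> B" "is_basis E indep (insert e (B - {f}))"
  shows "w f \<le> w e"
proof -
  have "sum w B \<le> sum w (insert e (B - {f}))" using assms unfolding is_mwb_def by blast
  then show ?thesis using swap_sum[of B f e w] assms by simp
qed

context
  fixes E :: "'a set" and indep :: "'a set \<Rightarrow> bool" and A :: "'a \<Rightarrow> real set" and B :: "'a set"
begin

definition bad :: "('a \<Rightarrow> real) \<Rightarrow> 'a set \<Rightarrow> 'a \<times> 'a \<Rightarrow> bool" where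
  "bad v R p \<longleftrightarrow> fst p \<in> B \<and> snd p \<in> E - B \<and> is_basis E indep (insert (snd p) (B - {fst p})) \<and>
     (\<exists>w'. weight_assignment E A w' \<and> (\<forall>x\<in>R. w' x = v x) \<and> w' (snd p) < w' (fst p))"

fun Rs :: "('a \<Rightarrow> real) \<Rightarrow> nat \<Rightarrow> 'a set" where
  "Rs v 0 = {}"
| "Rs v (Suc k) = (if (\<exists>p. bad v (Rs v k) p)
     then Rs v k \<union> {fst (SOME p. bad v (Rs v k) p), snd (SOME p. bad v (Rs v k) p)}
     else Rs v k)"

declare Rs.simps(2)[simp del]

lemma Rs_Suc_T: "\<exists>p. bad v (Rs v k) p \<Longrightarrow>
  Rs v (Suc k) = Rs v k \<union> {fst (SOME p. bad v (Rs v k) p), snd (SOME p. bad v (Rs v k) p)}"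
  by (simp add: Rs.simps(2))

lemma Rs_Suc_F: "\<not> (\<exists>p. bad v (Rs v k) p) \<Longrightarrow> Rs v (Suc k) = Rs v k"
  by (simp add: Rs.simps(2))

definition strat :: "'a strategy" where
  "strat m = (if (\<exists>k x. Rs (\<lambda>y. the (m y)) k \<subseteq> dom m \<and> x \<in> Rs (\<lambda>y. the (m y)) (Suc k) - dom m)
     then Some (SOME x. \<exists>k. Rs (\<lambda>y. the (m y)) k \<subseteq> dom m \<and> x \<in> Rs (\<lambda>y. the (m y)) (Suc k) - dom m)
     else None)"

lemma bad_cong: "\<forall>x\<in>R. v x = v' x \<Longrightarrow> bad v R = bad v' R"
  unfolding bad_def by (intro ext) auto

lemma Rs_mono_Suc: "Rs v k \<subseteq> Rs v (Suc k)"
  by (auto simp: Rs.simps(2))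

lemma Rs_mono: "k \<le> j \<Longrightarrow> Rs v k \<subseteq> Rs v j"
proof (induction j)
  case 0 then show ?case by simp
next
  case (Suc j)
  then show ?case using Rs_mono_Suc[of v j] by (auto simp: le_Suc_eq)
qed

lemma Rs_cong: "Rs w k \<subseteq> R \<Longrightarrow> \<forall>x\<in>R. v x = w x \<Longrightarrow> Rs v k = Rs w k \<and> Rs v (Suc k) = Rs w (Suc k)"
proof (induction k)
  case 0
  have "bad v {} = bad w {}" by (rule bad_cong) simp
  then show ?case by (simp add: Rs.simps(2))
next
  case (Suc k)
  have "Rs w k \<subseteq> R" using Suc.prems(1) Rs_mono_Suc[of w k] by blast
  then have e1: "Rs v (Suc k) = Rs w (Suc k)" using Suc.IH Suc.prems by blast
  have "bad v (Rs w (Suc k)) = bad w (Rs w (Suc k))" using Suc.prems by (intro bad_cong) blast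
  then have "Rs v (Suc (Suc k)) = Rs w (Suc (Suc k))"
    by (simp only: Rs.simps(2)[of v "Suc k"] Rs.simps(2)[of w "Suc k"] e1)
  then show ?case using e1 by blast
qed


lemma bad_someI: "\<exists>p. bad v R p \<Longrightarrow> bad v R (SOME p. bad v R p)"
  by (rule someI_ex)

lemma Rs_sub_E:
  assumes M: "matroid E indep" and iB: "indep B"
  shows "Rs v k \<subseteq> E"
proof (induction k)
  case 0 then show ?case by simp
next
  case (Suc k)
  show ?case
  proof (cases "\<exists>p. bad v (Rs v k) p")
    case True
    then have "bad v (Rs v k) (SOME p. bad v (Rs v k) p)" by (rule bad_someI)
    then have "fst (SOME p. bad v (Rs v k) p) \<in> E" "snd (SOME p. bad v (Rs v k) p) \<in> E"
      using mat_sub[OF M iB] unfolding bad_def by blast+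
    then show ?thesis using Suc Rs_Suc_T[OF True] by simp
  next
    case False then show ?thesis using Suc Rs_Suc_F[OF False] by simp
  qed
qed

lemma bad_new:
  fixes w :: "'a \<Rightarrow> real"
  assumes MB: "is_mwb E indep w B" and finB: "finite B" and bd: "bad w R p"
  shows "\<not> ({fst p, snd p} \<subseteq> R)"
proof
  assume sub: "{fst p, snd p} \<subseteq> R"
  from bd obtain w' where w': "\<forall>x\<in>R. w' x = w x" "w' (snd p) < w' (fst p)" unfolding bad_def by blast
  have "w (fst p) \<le> w (snd p)" using mwb_swap[OF MB finB] bd unfolding bad_def by blast
  then show False using w' sub by auto
qed

lemma hit:
  fixes w :: "'a \<Rightarrow> real"
  assumes W: "weighted_uncertainty_matroid E indep A w" and finB: "finite B"
    and bd: "bad v R p" and vw: "\<forall>x\<in>R. v x = w x" and V: "verifies E indep A w Q B"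
  shows "\<exists>y\<in>Q. y \<in> {fst p, snd p} - R"
proof (rule ccontr)
  assume nh: "\<not> ?thesis"
  obtain f e where p: "p = (f, e)" by (cases p)
  from bd obtain w' where f: "f \<in> B" and e: "e \<in> E - B" and bas: "is_basis E indep (insert e (B - {f}))"
    and wa: "weight_assignment E A w'" and cons: "\<forall>x\<in>R. w' x = v x" and lt: "w' e < w' f"
    unfolding bad_def p by auto
  define w'' where "w'' = (\<lambda>x. if x = f \<or> x = e then w' x else w x)"
  have wa2: "weight_assignment E A w''"
    using wa W unfolding weight_assignment_def weighted_uncertainty_matroid_def w''_def by auto
  have cons2: "consistent_with Q w w''"
    unfolding consistent_with_def w''_def using nh cons vw p by auto
  have "is_mwb E indep w'' B" using V wa2 cons2 unfolding verifies_def by blast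
  then have "w'' f \<le> w'' e" using mwb_swap[OF _ finB f _ bas] e by blast
  then show False using lt unfolding w''_def by simp
qed

lemma Rs_fin:
  assumes M: "matroid E indep" and iB: "indep B"
  shows "finite (Rs v k)"
  using finite_subset[OF Rs_sub_E[OF M iB] mat_fin[OF M]] .

lemma card_bound:
  fixes w :: "'a \<Rightarrow> real"
  assumes W: "weighted_uncertainty_matroid E indep A w" and iB: "indep B"
    and V: "verifies E indep A w Q B"
  shows "card (Rs w k) \<le> 2 * card (Q \<inter> Rs w k)"
proof (induction k)
  case 0 then show ?case by simp
next
  case (Suc k)
  have M: "matroid E indep" using W unfolding weighted_uncertainty_matroid_def by blast
  have finB: "finite B" using finite_subset[OF mat_sub[OF M iB] mat_fin[OF M]] .
  have QE: "Q \<subseteq> E" using V unfolding verifies_def by blast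
  have finQ: "finite Q" using finite_subset[OF QE mat_fin[OF M]] .
  show ?case
  proof (cases "\<exists>p. bad w (Rs w k) p")
    case True
    let ?p = "SOME p. bad w (Rs w k) p"
    have bd: "bad w (Rs w k) ?p" using True by (rule bad_someI)
    obtain y where y: "y \<in> Q" "y \<in> {fst ?p, snd ?p} - Rs w k" using hit[OF W finB bd _ V] by blast
    have eq: "Rs w (Suc k) = Rs w k \<union> {fst ?p, snd ?p}" using Rs_Suc_T[OF True] .
    have c2: "card {fst ?p, snd ?p} \<le> 2" by (cases "fst ?p = snd ?p") auto
    have c1: "card (Rs w k \<union> {fst ?p, snd ?p}) \<le> card (Rs w k) + 2"
      using card_Un_le[of "Rs w k" "{fst ?p, snd ?p}"] c2 by linarith
    have finI: "finite (Q \<inter> Rs w k)" using finQ by simp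
    have "insert y (Q \<inter> Rs w k) \<subseteq> Q \<inter> (Rs w k \<union> {fst ?p, snd ?p})" using y by blast
    then have "card (insert y (Q \<inter> Rs w k)) \<le> card (Q \<inter> (Rs w k \<union> {fst ?p, snd ?p}))"
      using finQ by (intro card_mono) auto
    moreover have "card (insert y (Q \<inter> Rs w k)) = Suc (card (Q \<inter> Rs w k))" using y finI by simp
    ultimately show ?thesis using eq c1 Suc.IH by simp
  next
    case False then show ?thesis using Suc Rs_Suc_F[OF False] by simp
  qed
qed

lemma grows:
  fixes w :: "'a \<Rightarrow> real"
  assumes M: "matroid E indep" and MB: "is_mwb E indep w B"
  shows "(\<forall>j<k. \<exists>p. bad w (Rs w j) p) \<longrightarrow> k \<le> card (Rs w k)"
proof (induction k)
  case 0 then show ?case by simp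
next
  case (Suc k)
  have iB: "indep B" using MB unfolding is_mwb_def is_basis_def by blast
  have finB: "finite B" using finite_subset[OF mat_sub[OF M iB] mat_fin[OF M]] .
  show ?case
  proof
    assume a: "\<forall>j<Suc k. \<exists>p. bad w (Rs w j) p"
    then have ex: "\<exists>p. bad w (Rs w k) p" by blast
    let ?p = "SOME p. bad w (Rs w k) p"
    have bd: "bad w (Rs w k) ?p" using ex by (rule bad_someI)
    have nsub: "\<not> {fst ?p, snd ?p} \<subseteq> Rs w k" using bad_new[OF MB finB bd] .
    have eq: "Rs w (Suc k) = Rs w k \<union> {fst ?p, snd ?p}" using Rs_Suc_T[OF ex] .
    have "Rs w k \<subset> Rs w (Suc k)" using eq nsub by blast
    then have "card (Rs w k) < card (Rs w (Suc k))" using Rs_fin[OF M iB] by (intro psubset_card_mono) auto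
    then show "Suc k \<le> card (Rs w (Suc k))" using Suc.IH a by simp
  qed
qed

lemma exists_stable:
  fixes w :: "'a \<Rightarrow> real"
  assumes M: "matroid E indep" and MB: "is_mwb E indep w B"
  shows "\<exists>j. \<not> (\<exists>p. bad w (Rs w j) p)"
proof (rule ccontr)
  assume "\<not> ?thesis"
  then have "Suc (card E) \<le> card (Rs w (Suc (card E)))" using grows[OF M MB, of "Suc (card E)"] by blast
  moreover have iB: "indep B" using MB unfolding is_mwb_def is_basis_def by blast
  have "card (Rs w (Suc (card E))) \<le> card E"
    using Rs_sub_E[OF M iB] mat_fin[OF M] by (intro card_mono) auto
  ultimately show False by simp
qed

lemma stable_after:
  assumes "\<not> (\<exists>p. bad w (Rs w j) p)"
  shows "Rs w (j + i) = Rs w j"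
  by (induction i) (use assms in \<open>auto simp: Rs.simps(2)\<close>)

lemma all_sub_stable:
  assumes "\<not> (\<exists>p. bad w (Rs w j) p)"
  shows "Rs w i \<subseteq> Rs w j"
proof (cases "i \<le> j")
  case True then show ?thesis by (rule Rs_mono)
next
  case False
  then obtain d where "i = j + d" by (metis le_add_diff_inverse nat_le_linear)
  then show ?thesis using stable_after[OF assms, of d] by simp
qed

lemma strat_eq:
  fixes w :: "'a \<Rightarrow> real"
  assumes c: "\<forall>x\<in>dom m. m x = Some (w x)"
  shows "strat m = (if (\<exists>k x. Rs w k \<subseteq> dom m \<and> x \<in> Rs w (Suc k) - dom m)
     then Some (SOME x. \<exists>k. Rs w k \<subseteq> dom m \<and> x \<in> Rs w (Suc k) - dom m)
     else None)"
proof -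
  let ?v = "\<lambda>y. the (m y)"
  have vw: "\<forall>x\<in>dom m. ?v x = w x" using c by simp
  have wv: "\<forall>x\<in>dom m. w x = ?v x" using c by simp
  have eqk: "(Rs ?v k \<subseteq> dom m \<and> x \<in> Rs ?v (Suc k) - dom m) \<longleftrightarrow> (Rs w k \<subseteq> dom m \<and> x \<in> Rs w (Suc k) - dom m)"
    for k x
  proof
    assume a: "Rs ?v k \<subseteq> dom m \<and> x \<in> Rs ?v (Suc k) - dom m"
    then show "Rs w k \<subseteq> dom m \<and> x \<in> Rs w (Suc k) - dom m" using Rs_cong[of ?v k "dom m" w] wv by simp
  next
    assume a: "Rs w k \<subseteq> dom m \<and> x \<in> Rs w (Suc k) - dom m"
    then show "Rs ?v k \<subseteq> dom m \<and> x \<in> Rs ?v (Suc k) - dom m" using Rs_cong[of w k "dom m" ?v] vw by simp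
  qed
  show ?thesis unfolding strat_def by (simp only: eqk)
qed


lemma strat_some:
  fixes w :: "'a \<Rightarrow> real"
  assumes nb: "\<not> (\<exists>p. bad w (Rs w j) p)" and c: "\<forall>x\<in>dom m. m x = Some (w x)"
    and s: "strat m = Some x"
  shows "x \<in> Rs w j - dom m"
proof -
  have cond: "\<exists>k x. Rs w k \<subseteq> dom m \<and> x \<in> Rs w (Suc k) - dom m"
    using s strat_eq[OF c] by (auto split: if_splits)
  then have xe: "x = (SOME x. \<exists>k. Rs w k \<subseteq> dom m \<and> x \<in> Rs w (Suc k) - dom m)"
    using s strat_eq[OF c] by simp
  have ex: "\<exists>x. \<exists>k. Rs w k \<subseteq> dom m \<and> x \<in> Rs w (Suc k) - dom m" using cond by blast
  have "\<exists>k. Rs w k \<subseteq> dom m \<and> x \<in> Rs w (Suc k) - dom m"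
    unfolding xe by (rule someI_ex[OF ex])
  then show ?thesis using all_sub_stable[OF nb] by blast
qed

lemma strat_none:
  fixes w :: "'a \<Rightarrow> real"
  assumes nb: "\<not> (\<exists>p. bad w (Rs w j) p)" and c: "\<forall>x\<in>dom m. m x = Some (w x)"
  shows "strat m = None \<longleftrightarrow> Rs w j \<subseteq> dom m"
proof
  assume "strat m = None"
  then have h: "\<forall>k. Rs w k \<subseteq> dom m \<longrightarrow> Rs w (Suc k) \<subseteq> dom m"
    using strat_eq[OF c] by (auto split: if_splits)
  have "Rs w k \<subseteq> dom m" for k
    by (induction k) (use h in auto)
  then show "Rs w j \<subseteq> dom m" .
next
  assume a: "Rs w j \<subseteq> dom m"
  have "\<not> (\<exists>k x. Rs w k \<subseteq> dom m \<and> x \<in> Rs w (Suc k) - dom m)"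
    using a all_sub_stable[OF nb] by blast
  then show "strat m = None" using strat_eq[OF c] by simp
qed

lemma run_inv:
  fixes w :: "'a \<Rightarrow> real"
  assumes nb: "\<not> (\<exists>p. bad w (Rs w j) p)"
  shows "(\<forall>x\<in>dom (run strat w t). run strat w t x = Some (w x)) \<and> dom (run strat w t) \<subseteq> Rs w j"
proof (induction t)
  case 0 then show ?case by simp
next
  case (Suc t)
  show ?case
  proof (cases "strat (run strat w t)")
    case None then show ?thesis using Suc by simp
  next
    case (Some x)
    have x: "x \<in> Rs w j - dom (run strat w t)" using strat_some[OF nb _ Some] Suc by blast
    have r: "run strat w (Suc t) = (run strat w t)(x \<mapsto> w x)" using Some by simp
    have d: "dom ((run strat w t)(x \<mapsto> w x)) = insert x (dom (run strat w t))" by simp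
    show ?thesis unfolding r d using Suc x by auto
  qed
qed

lemma run_count:
  fixes w :: "'a \<Rightarrow> real"
  assumes nb: "\<not> (\<exists>p. bad w (Rs w j) p)" and fin: "finite (Rs w j)"
  shows "strat (run strat w t) = None \<or> t \<le> card (dom (run strat w t))"
proof (induction t)
  case 0 then show ?case by simp
next
  case (Suc t)
  show ?case
  proof (cases "strat (run strat w t)")
    case None then show ?thesis by simp
  next
    case (Some x)
    have inv: "\<forall>x\<in>dom (run strat w t). run strat w t x = Some (w x)" "dom (run strat w t) \<subseteq> Rs w j"
      using run_inv[OF nb] by blast+
    have x: "x \<notin> dom (run strat w t)" using strat_some[OF nb inv(1) Some] by blast
    have fd: "finite (dom (run strat w t))" using finite_subset[OF inv(2) fin] .
    have r: "run strat w (Suc t) = (run strat w t)(x \<mapsto> w x)" using Some by simp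
    have "dom (run strat w (Suc t)) = insert x (dom (run strat w t))" unfolding r by simp
    then have "card (dom (run strat w (Suc t))) = Suc (card (dom (run strat w t)))" using x fd by simp
    moreover have "t \<le> card (dom (run strat w t))" using Suc.IH Some by simp
    ultimately show ?thesis by (intro disjI2) linarith
  qed
qed

end


theorem lemma30:
  "\<exists>alg :: 'a algorithm.
     \<forall>E indep A w B Qstar.
       weighted_uncertainty_matroid E indep A w \<and>
       is_mwb E indep w B \<and>
       min_certificate E indep A w Qstar \<and>
       verifies E indep A w Qstar B
       \<longrightarrow> (\<exists>Q. terminates_with (alg E indep A B) w Q \<and>
                card Q \<le> 2 * card Qstar \<and>
                verifies E indep A w Q B)"
proof (intro exI[of _ strat] allI impI)
  fix E indep A w B Qstar
  assume H: "weighted_uncertainty_matroid E indep A w \<and> is_mwb E indep w B \<and>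
       min_certificate E indep A w Qstar \<and> verifies E indep A w Qstar B"
  then have W: "weighted_uncertainty_matroid E indep A w" and MB: "is_mwb E indep w B"
    and V: "verifies E indep A w Qstar B" by blast+
  have M: "matroid E indep" using W unfolding weighted_uncertainty_matroid_def by blast
  have BB: "is_basis E indep B" using MB unfolding is_mwb_def by blast
  have iB: "indep B" using BB unfolding is_basis_def by blast
  obtain j where nb: "\<not> (\<exists>p. bad E indep A B w (Rs E indep A B w j) p)"
    using exists_stable[OF M MB] by blast
  let ?R = "Rs E indep A B w j"
  have fin: "finite ?R" using Rs_fin[OF M iB] .
  have QE: "Qstar \<subseteq> E" using V unfolding verifies_def by blast
  have finQ: "finite Qstar" using finite_subset[OF QE mat_fin[OF M]] .
  let ?t = "Suc (card ?R)"
  have inv: "\<forall>x\<in>dom (run (strat E indep A B) w ?t). run (strat E indep A B) w ?t x = Some (w x)"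
    "dom (run (strat E indep A B) w ?t) \<subseteq> ?R"
    using run_inv[OF nb] by blast+
  have "card (dom (run (strat E indep A B) w ?t)) \<le> card ?R" using inv(2) fin by (rule card_mono[rotated])
  then have none: "strat E indep A B (run (strat E indep A B) w ?t) = None"
    using run_count[OF nb fin, of ?t] by linarith
  then have "?R \<subseteq> dom (run (strat E indep A B) w ?t)" using strat_none[OF nb inv(1)] by blast
  then have "dom (run (strat E indep A B) w ?t) = ?R" using inv(2) by blast
  then have T: "terminates_with (strat E indep A B) w ?R"
    unfolding terminates_with_def using none by blast
  have "card ?R \<le> 2 * card (Qstar \<inter> ?R)" using card_bound[OF W iB V] .
  moreover have "card (Qstar \<inter> ?R) \<le> card Qstar" using finQ by (intro card_mono) auto
  ultimately have C: "card ?R \<le> 2 * card Qstar" by linarith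
  have VR: "verifies E indep A w ?R B"
    unfolding verifies_def
  proof (intro conjI allI impI)
    show "?R \<subseteq> E" using Rs_sub_E[OF M iB] .
  next
    fix w' assume a: "weight_assignment E A w' \<and> consistent_with ?R w w'"
    show "is_mwb E indep w' B"
    proof (rule local_opt[OF M BB])
      fix f e assume f: "f \<in> B" and e: "e \<in> E - B" and bas: "is_basis E indep (insert e (B - {f}))"
      show "w' f \<le> w' e"
      proof (rule ccontr)
        assume "\<not> w' f \<le> w' e"
        then have "bad E indep A B w ?R (f, e)"
          unfolding bad_def using f e bas a unfolding consistent_with_def by auto
        then show False using nb by blast
      qed
    qed
  qed
  show "\<exists>Q. terminates_with (strat E indep A B) w Q \<and> card Q \<le> 2 * card Qstar \<and> verifies E indep A w Q B"
    using T C VR by blast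
qed

end
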